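(* For the gradient-descent approximate policy iteration sequence described in the context, let $c:=\frac{\sqrt{|S|}\,\|\Phi\|_\infty}{\sigma_{\min,\Phi}}$, $$\beta:=\alpha^{m+H-1}\delta_{FV}+c\,\alpha_{GD,\gamma}^\eta(\alpha^{m+H-1}\delta_{FV}+1),$$ $$\tau:=(1+c\,\alpha_{GD,\gamma}^\eta)\Big(\frac{\alpha^m+\alpha^{m+H-1}}{1-\alpha}\delta_{FV}+\delta_{app}+\delta_{FV}\epsilon_{PE}\Big)+\frac{c\,\alpha_{GD,\gamma}^\eta}{1-\alpha}.$$ Then for every $k\ge1$, $$\|J^{\mu_k}-J_k\|_\infty\le\beta\,\|J_{k-1}-J^{\mu_{k-1}}\|_\infty+\tau.$$
   Context: Consider a Markov decision process with finite state space $S$ (with $|S|$ states), finite action space $A$, transition probabilities $P_{ij}(a)$, rewards $r(s,a)\in[0,1]$, and discount factor $\alpha\in(0,1)$. A (deterministic stationary) policy is a map $\mu:S\to A$; its value is $J^\mu(s)=E[\sum_{t\ge0}\alpha^t r(s_t,\mu(s_t))\mid s_0=s]$, and $J^*(s)=\max_\mu J^\mu(s)$. For a policy $\mu$, $(T_\mu J)(s)=r(s,\mu(s))+\alpha\sum_j P_{sj}(\mu(s))J(j)$; the Bellman operator is $(TJ)(s)=\max_{a\in A}\{r(s,a)+\alpha\sum_j P_{sj}(a)J(j)\}$; powers denote repeated application. $\|\cdot\|_\infty$ denotes the max norm and the induced matrix norm; $\|\cdot\|_2$ the Euclidean norm. Gradient-descent approximate policy iteration: fix integers $m\ge1$, $H\ge1$,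 $\eta\ge1$, a step size $\gamma>0$, constants $\epsilon_{LA},\epsilon_{PE}\ge0$, a feature matrix $\Phi\in\mathbb{R}^{|S|\times d}$ whose row $i$ is $\phi(i)^\top$, and subsets $D_k\subseteq S$ ($k\ge0$) such that $\{\phi(i)\}_{i\in D_k}$ has rank $d$. Let $\Phi_{D_k}$ be the submatrix of $\Phi$ with rows indexed by $D_k$, $P_k\in\{0,1\}^{|D_k|\times|S|}$ the matrix selecting the coordinates in $D_k$, and $\mathcal{M}_{k+1}:=\Phi(\Phi_{D_k}^\top\Phi_{D_k})^{-1}\Phi_{D_k}^\top P_k$. Start with $\theta_0\in\mathbb{R}^d$, $J_0=\Phi\theta_0$, and an arbitrary policy $\mu_0$. For each $k\ge0$: $\mu_{k+1}$ is any policy with $\|T^HJ_k-T_{\mu_{k+1}}T^{H-1}J_k\|_\infty\le\epsilon_{LA}$; $w_{k+1}\in\mathbb{R}^{|S|}$ satisfies $w_{k+1}(i)=0$ for $i\notin D_k$ and $\|w_{k+1}\|_\infty\le\epsilon_{PE}$; $\hat J_{k+1}:=T^m_{\mu_{k+1}}T^{H-1}J_k+w_{k+1}$; set $\theta_{k+1,0}=\theta_k$ and for $\ell=1,\dots,\eta$, $\theta_{k+1,\ell}=\theta_{k+1,\ell-1}-\gamma\big(\Phi_{D_k}^\top\Phi_{D_k}\theta_{k+1,\ell-1}-\Phi_{D_k}^\top P_k\hat J_{k+1}\big)$; then $\theta_{k+1}=\theta_{k+1,\eta}$ and $J_{k+1}=\Phi\theta_{k+1}$. Define $\delta_{FV}:=\sup_{k\ge1}\|\mathcal{M}_k\|_\infty$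 (assumed finite), $\delta_{app}:=\sup_{k\ge1}\sup_\mu\|\mathcal{M}_kJ^\mu-J^\mu\|_\infty$ (inner supremum over all policies), $\alpha_{GD,\gamma}:=\sup_{k\ge0}\max_i|1-\gamma\lambda_i(\Phi_{D_k}^\top\Phi_{D_k})|$ where $\lambda_i$ is the $i$-th eigenvalue, and $\sigma_{\min,\Phi}$ the smallest singular value of $\Phi$. *)

theory Defs
  imports "HOL-Analysis.Analysis"
begin

text \<open>Value vectors are elements of real^'s; the feature matrix is Phi :: real^'d^'s
  (row i is phi(i)); parameter vectors are real^'d.\<close>

definition sup_norm :: "real^'n \<Rightarrow> real" where
  "sup_norm x = Max (range (\<lambda>i. \<bar>x $ i\<bar>))"

definition mat_sup_norm :: "real^'n^'m \<Rightarrow> real" where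
  "mat_sup_norm A = Max (range (\<lambda>i. \<Sum>j\<in>UNIV. \<bar>A $ i $ j\<bar>))"

definition eigenvalues :: "real^'n^'n \<Rightarrow> real set" where
  "eigenvalues A = {l. \<exists>v. v \<noteq> 0 \<and> A *v v = l *\<^sub>R v}"

definition sigma_min :: "real^'d^'s \<Rightarrow> real" where
  "sigma_min Phi = sqrt (Min (eigenvalues (transpose Phi ** Phi)))"

text \<open>Diagonal 0/1 matrix P_D^T P_D selecting the coordinates in D.\<close>
definition sel_diag :: "'s set \<Rightarrow> real^'s^'s" where
  "sel_diag D = (\<chi> i j. if i = j \<and> i \<in> D then 1 else 0)"

text \<open>Phi_D^T Phi_D = Phi^T P_D^T P_D Phi.\<close>
definition gram :: "real^'d^'s \<Rightarrow> 's set \<Rightarrow> real^'d^'d" where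
  "gram Phi D = transpose Phi ** sel_diag D ** Phi"

definition Mproj :: "real^'d^'s \<Rightarrow> 's set \<Rightarrow> real^'s^'s" where
  "Mproj Phi D = Phi ** matrix_inv (gram Phi D) ** transpose Phi ** sel_diag D"

definition Tmu :: "('s \<Rightarrow> 'a \<Rightarrow> real) \<Rightarrow> ('s \<Rightarrow> 'a \<Rightarrow> 's \<Rightarrow> real) \<Rightarrow> real
    \<Rightarrow> ('s::finite \<Rightarrow> 'a) \<Rightarrow> real^'s \<Rightarrow> real^'s" where
  "Tmu r P alpha mu J = (\<chi> s. r s (mu s) + alpha * (\<Sum>j\<in>UNIV. P s (mu s) j * J $ j))"

definition Tbell :: "('s \<Rightarrow> 'a::finite \<Rightarrow> real) \<Rightarrow> ('s \<Rightarrow> 'a \<Rightarrow> 's \<Rightarrow> real) \<Rightarrow> real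
    \<Rightarrow> real^'s::finite \<Rightarrow> real^'s" where
  "Tbell r P alpha J = (\<chi> s. Max (range (\<lambda>a. r s a + alpha * (\<Sum>j\<in>UNIV. P s a j * J $ j))))"

text \<open>Expected reward at time t under policy mu started in s:
  E[r(s_t, mu(s_t)) | s_0 = s] = (P_mu^t r_mu)(s).\<close>
definition exp_reward :: "('s \<Rightarrow> 'a \<Rightarrow> real) \<Rightarrow> ('s \<Rightarrow> 'a \<Rightarrow> 's \<Rightarrow> real)
    \<Rightarrow> ('s::finite \<Rightarrow> 'a) \<Rightarrow> nat \<Rightarrow> 's \<Rightarrow> real" where
  "exp_reward r P mu t = ((\<lambda>f s. \<Sum>j\<in>UNIV. P s (mu s) j * f j) ^^ t) (\<lambda>s. r s (mu s))"

definition Jpol :: "('s \<Rightarrow> 'a \<Rightarrow> real) \<Rightarrow> ('s \<Rightarrow> 'a \<Rightarrow> 's \<Rightarrow> real) \<Rightarrow> real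
    \<Rightarrow> ('s::finite \<Rightarrow> 'a) \<Rightarrow> real^'s" where
  "Jpol r P alpha mu = (\<chi> s. \<Sum>t. alpha ^ t * exp_reward r P mu t s)"

definition gd_iter :: "real^'d^'s \<Rightarrow> 's set \<Rightarrow> real \<Rightarrow> nat \<Rightarrow> real^'s \<Rightarrow> real^'d \<Rightarrow> real^'d" where
  "gd_iter Phi D gamma eta Jhat theta =
     ((\<lambda>th. th - gamma *\<^sub>R (gram Phi D *v th - transpose Phi *v (sel_diag D *v Jhat))) ^^ eta) theta"

end

theory Submission
  imports Defs
begin


lemma sup_norm_ge: "\<bar>x $ i\<bar> \<le> sup_norm (x::real^'n)"
  unfolding sup_norm_def by (rule Max_ge) auto

lemma sup_norm_le: "(\<And>i. \<bar>x $ i\<bar> \<le> c) \<Longrightarrow> sup_norm (x::real^'n) \<le> c"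
  unfolding sup_norm_def by (subst Max_le_iff) auto

lemma sup_norm_nonneg: "0 \<le> sup_norm (x::real^'n)"
  using sup_norm_ge[of x] abs_ge_zero order_trans by blast

lemma sup_norm_triangle: "sup_norm ((x::real^'n) + y) \<le> sup_norm x + sup_norm y"
  by (rule sup_norm_le) (metis abs_triangle_ineq add_mono order_trans sup_norm_ge vector_add_component)

lemma sup_norm_commute: "sup_norm ((x::real^'n) - y) = sup_norm (y - x)"
  by (intro antisym sup_norm_le) (metis abs_minus_commute sup_norm_ge vector_minus_component)+

lemma sup_norm_tri3: "sup_norm ((x::real^'n) - z) \<le> sup_norm (x - y) + sup_norm (y - z)"
  by (metis diff_add_cancel add_diff_eq sup_norm_triangle diff_add_eq)

lemma sup_norm_le_norm: "sup_norm (x::real^'n) \<le> norm x"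
  by (rule sup_norm_le) (rule component_le_norm_cart)

lemma norm_le_sup_norm: "norm (x::real^'n) \<le> sqrt (real CARD('n)) * sup_norm x"
proof -
  have "norm x = sqrt (\<Sum>i\<in>UNIV. (x$i)^2)" by (simp add: norm_vec_def L2_set_def)
  also have "\<dots> \<le> sqrt (\<Sum>i\<in>(UNIV::'n set). (sup_norm x)^2)"
    by (intro real_sqrt_le_mono sum_mono) (metis abs_le_square_iff sup_norm_ge abs_of_nonneg sup_norm_nonneg)
  also have "\<dots> = sqrt (real CARD('n)) * sup_norm x"
    by (simp add: real_sqrt_mult sup_norm_nonneg)
  finally show ?thesis .
qed

lemma mat_sup_norm_bound: "sup_norm ((A::real^'n^'m) *v x) \<le> mat_sup_norm A * sup_norm x"
proof (rule sup_norm_le)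
  fix i
  have "\<bar>(A *v x) $ i\<bar> = \<bar>\<Sum>j\<in>UNIV. A$i$j * x$j\<bar>" by (simp add: matrix_vector_mult_def)
  also have "\<dots> \<le> (\<Sum>j\<in>UNIV. \<bar>A$i$j\<bar> * sup_norm x)"
    by (rule order_trans[OF sum_abs sum_mono]) (simp add: abs_mult mult_left_mono sup_norm_ge)
  also have "\<dots> = (\<Sum>j\<in>UNIV. \<bar>A$i$j\<bar>) * sup_norm x" by (simp add: sum_distrib_right)
  also have "\<dots> \<le> mat_sup_norm A * sup_norm x"
    unfolding mat_sup_norm_def by (intro mult_right_mono Max_ge) (auto simp: sup_norm_nonneg)
  finally show "\<bar>(A *v x) $ i\<bar> \<le> mat_sup_norm A * sup_norm x" .
qed

lemma mat_sup_norm_nonneg: "0 \<le> mat_sup_norm (A::real^'n^'m)"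
proof -
  obtain i :: 'm where True by simp
  have "0 \<le> (\<Sum>j\<in>UNIV. \<bar>A$i$j\<bar>)" by (simp add: sum_nonneg)
  also have "\<dots> \<le> mat_sup_norm A" unfolding mat_sup_norm_def by (rule Max_ge) auto
  finally show ?thesis .
qed



lemma funpow_fix:
  assumes fy: "f y = y" shows "(f ^^ n) y = y"
proof (induction n)
  case 0 show ?case by (simp only: funpow_0)
next
  case (Suc n)
  have "(f ^^ Suc n) y = f ((f ^^ n) y)" by (simp only: funpow.simps comp_apply)
  also have "\<dots> = f y" by (simp only: Suc.IH)
  also have "\<dots> = y" by (rule fy)
  finally show ?case .
qed

locale mdp =
  fixes r :: "'s::finite \<Rightarrow> 'a::finite \<Rightarrow> real" and P :: "'s \<Rightarrow> 'a \<Rightarrow> 's \<Rightarrow> real" and alpha :: real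
  assumes P_nonneg: "\<And>s a j. P s a j \<ge> 0"
    and P_sum: "\<And>s a. (\<Sum>j\<in>UNIV. P s a j) = 1"
    and r_range: "\<And>s a. 0 \<le> r s a \<and> r s a \<le> 1"
    and alpha: "0 < alpha" "alpha < 1"
begin

lemma Pdiff: "\<bar>(\<Sum>j\<in>UNIV. P s a j * x $ j) - (\<Sum>j\<in>UNIV. P s a j * y $ j)\<bar> \<le> sup_norm (x - y)"
proof -
  have "\<bar>(\<Sum>j\<in>UNIV. P s a j * x $ j) - (\<Sum>j\<in>UNIV. P s a j * y $ j)\<bar>
      = \<bar>\<Sum>j\<in>UNIV. P s a j * (x - y) $ j\<bar>" by (simp add: sum_subtractf right_diff_distrib)
  also have "\<dots> \<le> (\<Sum>j\<in>UNIV. P s a j * sup_norm (x - y))"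
    by (rule order_trans[OF sum_abs sum_mono]) (metis abs_mult abs_of_nonneg P_nonneg mult_left_mono sup_norm_ge)
  also have "\<dots> = sup_norm (x - y)" by (simp add: sum_distrib_right[symmetric] P_sum)
  finally show ?thesis .
qed

lemma Tmu_contr: "sup_norm (Tmu r P alpha mu x - Tmu r P alpha mu y) \<le> alpha * sup_norm (x - y)"
proof (rule sup_norm_le)
  fix s
  have "\<bar>(Tmu r P alpha mu x - Tmu r P alpha mu y) $ s\<bar> =
     alpha * \<bar>(\<Sum>j\<in>UNIV. P s (mu s) j * x $ j) - (\<Sum>j\<in>UNIV. P s (mu s) j * y $ j)\<bar>"
    using alpha by (simp add: Tmu_def right_diff_distrib[symmetric] abs_mult)
  also have "\<dots> \<le> alpha * sup_norm (x - y)" using alpha Pdiff by (simp add: mult_left_mono)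
  finally show "\<bar>(Tmu r P alpha mu x - Tmu r P alpha mu y) $ s\<bar> \<le> alpha * sup_norm (x - y)" .
qed

lemma Max_diff_le:
  fixes f g :: "'b::finite \<Rightarrow> real"
  assumes "\<And>a. f a \<le> g a + e"
  shows "Max (range f) \<le> Max (range g) + e"
proof -
  have "\<And>a. g a \<le> Max (range g)" by (rule Max_ge) auto
  then show ?thesis by (subst Max_le_iff) (auto intro: order_trans[OF assms] add_right_mono)
qed

lemma Tbell_contr: "sup_norm (Tbell r P alpha x - Tbell r P alpha y) \<le> alpha * sup_norm (x - y)"
proof (rule sup_norm_le)
  fix s
  let ?f = "\<lambda>x a. r s a + alpha * (\<Sum>j\<in>UNIV. P s a j * x $ j)"
  have b: "?f x a \<le> ?f y a + alpha * sup_norm (x - y)" "?f y a \<le> ?f x a + alpha * sup_norm (x - y)" for a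
  proof -
    have "alpha * \<bar>(\<Sum>j\<in>UNIV. P s a j * x $ j) - (\<Sum>j\<in>UNIV. P s a j * y $ j)\<bar> \<le> alpha * sup_norm (x - y)"
      using alpha Pdiff by (simp add: mult_left_mono)
    then have "\<bar>?f x a - ?f y a\<bar> \<le> alpha * sup_norm (x - y)"
      using alpha by (simp add: right_diff_distrib[symmetric] abs_mult)
    then show "?f x a \<le> ?f y a + alpha * sup_norm (x - y)" "?f y a \<le> ?f x a + alpha * sup_norm (x - y)"
      by linarith+
  qed
  have "Max (range (?f x)) \<le> Max (range (?f y)) + alpha * sup_norm (x - y)"
       "Max (range (?f y)) \<le> Max (range (?f x)) + alpha * sup_norm (x - y)"
    by (rule Max_diff_le, rule b)+
  then have "\<bar>Max (range (?f x)) - Max (range (?f y))\<bar> \<le> alpha * sup_norm (x - y)" by linarith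
  then show "\<bar>(Tbell r P alpha x - Tbell r P alpha y) $ s\<bar> \<le> alpha * sup_norm (x - y)"
    by (simp add: Tbell_def)
qed

lemma pow_contr:
  fixes F :: "real^'n \<Rightarrow> real^'n"
  assumes "\<And>x y. sup_norm (F x - F y) \<le> alpha * sup_norm (x - y)"
  shows "sup_norm ((F ^^ n) x - (F ^^ n) y) \<le> alpha ^ n * sup_norm (x - y)"
proof (induction n)
  case (Suc n)
  have "sup_norm ((F ^^ Suc n) x - (F ^^ Suc n) y) \<le> alpha * sup_norm ((F ^^ n) x - (F ^^ n) y)"
    using assms[of "(F ^^ n) x" "(F ^^ n) y"] by simp
  also have "\<dots> \<le> alpha * (alpha ^ n * sup_norm (x - y))" using Suc alpha by (simp add: mult_left_mono)
  finally show ?case by simp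
qed simp

definition box :: "real^'s \<Rightarrow> bool" where
  "box x \<longleftrightarrow> (\<forall>i. 0 \<le> x $ i \<and> x $ i \<le> 1 / (1 - alpha))"

lemma box_dist: "box x \<Longrightarrow> box y \<Longrightarrow> sup_norm (x - y) \<le> 1 / (1 - alpha)"
  unfolding box_def by (intro sup_norm_le) (simp add: abs_le_iff, smt (verit))

lemma Psum_box: "box x \<Longrightarrow> 0 \<le> (\<Sum>j\<in>UNIV. P s a j * x $ j) \<and> (\<Sum>j\<in>UNIV. P s a j * x $ j) \<le> 1 / (1 - alpha)"
proof -
  assume "box x"
  then have "\<And>j. 0 \<le> P s a j * x $ j" "\<And>j. P s a j * x $ j \<le> P s a j * (1 / (1 - alpha))"
    unfolding box_def by (simp add: P_nonneg, meson P_nonneg mult_left_mono)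
  then show ?thesis
    by (metis (no_types, lifting) P_sum sum_distrib_right sum_mono sum_nonneg mult_1)
qed

lemma box_step: "box x \<Longrightarrow> 0 \<le> r s a + alpha * (\<Sum>j\<in>UNIV. P s a j * x $ j)
   \<and> r s a + alpha * (\<Sum>j\<in>UNIV. P s a j * x $ j) \<le> 1 / (1 - alpha)"
proof -
  assume "box x"
  from Psum_box[OF this, of s a] have h: "0 \<le> (\<Sum>j\<in>UNIV. P s a j * x $ j)" "(\<Sum>j\<in>UNIV. P s a j * x $ j) \<le> 1 / (1 - alpha)" by auto
  have "alpha * (\<Sum>j\<in>UNIV. P s a j * x $ j) \<le> alpha * (1 / (1 - alpha))"
    using mult_left_mono[OF h(2), of alpha] alpha by simp
  moreover have "1 + alpha * (1 / (1 - alpha)) = 1 / (1 - alpha)" using alpha by (simp add: field_simps)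
  ultimately show ?thesis using r_range[of s a] h alpha by (smt (verit) mult_nonneg_nonneg)
qed

lemma Tbell_box: "box x \<Longrightarrow> box (Tbell r P alpha x)"
proof -
  assume b: "box x"
  show ?thesis unfolding box_def Tbell_def
  proof (intro allI conjI)
    fix s
    let ?f = "\<lambda>a. r s a + alpha * (\<Sum>j\<in>UNIV. P s a j * x $ j)"
    obtain a :: 'a where True by simp
    have "0 \<le> ?f a" using box_step[OF b] by blast
    also have "?f a \<le> Max (range ?f)" by (rule Max_ge) auto
    finally show "0 \<le> (\<chi> s. Max (range (\<lambda>a. r s a + alpha * (\<Sum>j\<in>UNIV. P s a j * x $ j)))) $ s" by simp
    show "(\<chi> s. Max (range (\<lambda>a. r s a + alpha * (\<Sum>j\<in>UNIV. P s a j * x $ j)))) $ s \<le> 1 / (1 - alpha)"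
    proof -
      have "Max (range ?f) \<le> 1 / (1 - alpha)" using box_step[OF b] by (subst Max_le_iff) auto
      then show ?thesis by simp
    qed
  qed
qed

lemma Tbell_pow_box: "box x \<Longrightarrow> box ((Tbell r P alpha ^^ n) x)"
  by (induction n) (auto intro: Tbell_box)

lemma exp_reward_Suc: "exp_reward r P mu (Suc t) s = (\<Sum>j\<in>UNIV. P s (mu s) j * exp_reward r P mu t j)"
  by (simp add: exp_reward_def)

lemma exp_reward_0: "exp_reward r P mu 0 s = r s (mu s)"
  by (simp add: exp_reward_def)

lemma exp_reward_bd: "0 \<le> exp_reward r P mu t s \<and> exp_reward r P mu t s \<le> 1"
proof (induction t arbitrary: s)
  case 0 then show ?case using r_range[of s "mu s"] by (simp only: exp_reward_0)
next
  case (Suc t)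
  have h1: "0 \<le> P s (mu s) j * exp_reward r P mu t j" for j
    using Suc.IH[of j] P_nonneg[of s "mu s" j] by (intro mult_nonneg_nonneg) auto
  have h2: "P s (mu s) j * exp_reward r P mu t j \<le> P s (mu s) j" for j
    using Suc.IH[of j] P_nonneg[of s "mu s" j] by (intro mult_left_le) auto
  have "0 \<le> (\<Sum>j\<in>UNIV. P s (mu s) j * exp_reward r P mu t j)" by (rule sum_nonneg) (rule h1)
  moreover have "(\<Sum>j\<in>UNIV. P s (mu s) j * exp_reward r P mu t j) \<le> (\<Sum>j\<in>UNIV. P s (mu s) j)"
    by (rule sum_mono) (rule h2)
  ultimately show ?case unfolding exp_reward_Suc P_sum by simp
qed

lemma summ: "summable (\<lambda>t. alpha ^ t * exp_reward r P mu t s)"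
proof (rule summable_comparison_test[OF _ summable_geometric[of alpha]])
  have "norm (alpha ^ n * exp_reward r P mu n s) \<le> alpha ^ n" for n
  proof -
    have e: "0 \<le> exp_reward r P mu n s" "exp_reward r P mu n s \<le> 1" using exp_reward_bd by auto
    have a: "0 \<le> alpha ^ n" using alpha by simp
    have "norm (alpha ^ n * exp_reward r P mu n s) = alpha ^ n * exp_reward r P mu n s"
      using e a by simp
    also have "\<dots> \<le> alpha ^ n" using e a by (intro mult_left_le) auto
    finally show ?thesis .
  qed
  then show "\<exists>N. \<forall>n\<ge>N. norm (alpha ^ n * exp_reward r P mu n s) \<le> alpha ^ n" by blast
qed (use alpha in simp)

lemma Jpol_box: "box (Jpol r P alpha mu)"
  unfolding box_def Jpol_def
proof (intro allI conjI)
  fix s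
  show "0 \<le> (\<chi> s. \<Sum>t. alpha ^ t * exp_reward r P mu t s) $ s"
    unfolding vec_lambda_beta
    by (rule suminf_nonneg[OF summ]) (use exp_reward_bd alpha in simp)
  have "(\<Sum>t. alpha ^ t * exp_reward r P mu t s) \<le> (\<Sum>t. alpha ^ t)"
  proof (rule suminf_le[OF _ summ summable_geometric])
    fix n show "alpha ^ n * exp_reward r P mu n s \<le> alpha ^ n"
      using exp_reward_bd[of mu n s] alpha by (simp add: mult_left_le)
  qed (use alpha in simp)
  also have "\<dots> = 1 / (1 - alpha)" using alpha suminf_geometric[of alpha] by simp
  finally show "(\<chi> s. \<Sum>t. alpha ^ t * exp_reward r P mu t s) $ s \<le> 1 / (1 - alpha)"
    unfolding vec_lambda_beta .
qed

lemma Jpol_fix: "Tmu r P alpha mu (Jpol r P alpha mu) = Jpol r P alpha mu"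
proof -
  have "(\<Sum>t. alpha ^ t * exp_reward r P mu t s) = r s (mu s) + alpha * (\<Sum>j\<in>UNIV. P s (mu s) j * (\<Sum>t. alpha ^ t * exp_reward r P mu t j))" for s
  proof -
    have "(\<Sum>t. alpha ^ t * exp_reward r P mu t s) = (\<Sum>t. alpha ^ Suc t * exp_reward r P mu (Suc t) s) + r s (mu s)"
      using suminf_split_head[OF summ[of mu s]] by (simp add: exp_reward_0)
    also have "(\<Sum>t. alpha ^ Suc t * exp_reward r P mu (Suc t) s) = (\<Sum>t. alpha * (\<Sum>j\<in>UNIV. P s (mu s) j * (alpha ^ t * exp_reward r P mu t j)))"
      by (simp add: exp_reward_Suc sum_distrib_left mult_ac)
    also have "\<dots> = alpha * (\<Sum>t. (\<Sum>j\<in>UNIV. P s (mu s) j * (alpha ^ t * exp_reward r P mu t j)))"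
      by (rule suminf_mult) (intro summable_sum summable_mult summ)
    also have "(\<Sum>t. (\<Sum>j\<in>UNIV. P s (mu s) j * (alpha ^ t * exp_reward r P mu t j))) = (\<Sum>j\<in>UNIV. (\<Sum>t. P s (mu s) j * (alpha ^ t * exp_reward r P mu t j)))"
      by (rule suminf_sum) (intro summable_mult summ)
    also have "\<dots> = (\<Sum>j\<in>UNIV. P s (mu s) j * (\<Sum>t. alpha ^ t * exp_reward r P mu t j))"
      by (intro sum.cong refl suminf_mult summ)
    finally show ?thesis by simp
  qed
  note eq = this
  show ?thesis unfolding Tmu_def Jpol_def
    by (simp only: vec_eq_iff vec_lambda_beta) (intro allI, rule eq[symmetric])
qed

lemma Jpol_fix_pow: "(Tmu r P alpha mu ^^ n) (Jpol r P alpha mu) = Jpol r P alpha mu"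
  using funpow_fix[of "Tmu r P alpha mu" "Jpol r P alpha mu" n] Jpol_fix by blast

end


lemma sym_dot:
  fixes A :: "real^'n^'n"
  assumes "transpose A = A"
  shows "x \<bullet> (A *v y) = (A *v x) \<bullet> y"
proof -
  have "x \<bullet> (A *v y) = (x v* A) \<bullet> y" by (simp add: dot_lmul_matrix)
  also have "x v* A = transpose A *v x" by simp
  finally show ?thesis using assms by simp
qed

lemma transpose_diff': "transpose ((A::real^'n^'m) - B) = transpose A - transpose B"
  by (simp add: transpose_def vec_eq_iff)

lemma transpose_neg': "transpose (- (A::real^'n^'m)) = - transpose A"
  by (simp add: transpose_def vec_eq_iff)

lemma psd_zero:
  fixes Q :: "real^'n^'n"
  assumes sym: "transpose Q = Q" and psd: "\<And>x. 0 \<le> x \<bullet> (Q *v x)" and z: "x0 \<bullet> (Q *v x0) = 0"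
  shows "Q *v x0 = 0"
proof -
  define z where "z = Q *v x0"
  define a where "a = z \<bullet> z"
  define b where "b = z \<bullet> (Q *v z)"
  have b0: "0 \<le> b" using psd b_def by simp
  have a0: "0 \<le> a" using a_def by simp
  have x0z: "x0 \<bullet> (Q *v z) = a" using sym_dot[OF sym, of x0 z] by (simp add: z_def a_def)
  have exp: "(x0 + t *\<^sub>R z) \<bullet> (Q *v (x0 + t *\<^sub>R z)) = 2 * t * a + t^2 * b" for t
    using z x0z by (simp add: matrix_vector_right_distrib matrix_vector_mult_scaleR inner_add_left inner_add_right
        algebra_simps power2_eq_square a_def b_def z_def[symmetric] inner_commute)
  define t where "t = - a / (b + 1)"
  have h0: "0 \<le> 2 * t * a + t^2 * b" using psd[of "x0 + t *\<^sub>R z"] exp by simp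
  have bp: "b + 1 > 0" using b0 by simp
  have tb: "t * (b + 1) = - a" using bp by (simp add: t_def)
  have "(2 * t * a + t^2 * b) * (b + 1)^2 = 2 * a * (t * (b + 1)) * (b + 1) + (t * (b + 1))^2 * b"
    by (simp add: algebra_simps power2_eq_square)
  also have "\<dots> = 0 - a^2 * (b + 2)" unfolding tb by (simp add: algebra_simps power2_eq_square)
  finally have "0 \<le> 0 - a^2 * (b + 2)" using h0 bp by (metis mult_nonneg_nonneg zero_le_power2)
  then have "a^2 * (b + 2) \<le> 0" by simp
  then have "a^2 \<le> 0" using b0 by (simp add: mult_le_0_iff)
  then have "a = 0" by simp
  then show ?thesis by (simp add: a_def z_def)
qed

lemma eig_finite:
  fixes A :: "real^'n^'n"
  assumes sym: "transpose A = A"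
  shows "finite (eigenvalues A)"
proof -
  define v where "v l = (SOME v. v \<noteq> 0 \<and> A *v v = l *\<^sub>R v)" for l
  have v: "v l \<noteq> 0 \<and> A *v v l = l *\<^sub>R v l" if "l \<in> eigenvalues A" for l
  proof -
    from that obtain w where "w \<noteq> 0 \<and> A *v w = l *\<^sub>R w" unfolding eigenvalues_def by blast
    then show ?thesis unfolding v_def by (rule someI)
  qed
  have inj: "inj_on v (eigenvalues A)"
  proof (rule inj_onI)
    fix l1 l2 assume "l1 \<in> eigenvalues A" "l2 \<in> eigenvalues A" "v l1 = v l2"
    then have "l1 *\<^sub>R v l1 = l2 *\<^sub>R v l1" "v l1 \<noteq> 0" using v by metis+
    then show "l1 = l2" by (metis scaleR_cancel_right)
  qed
  have orth: "pairwise orthogonal (v ` eigenvalues A)"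
  proof (rule pairwiseI, clarify)
    fix l1 l2 assume l: "l1 \<in> eigenvalues A" "l2 \<in> eigenvalues A" "v l1 \<noteq> v l2"
    then have "l1 \<noteq> l2" by auto
    have "l1 * (v l1 \<bullet> v l2) = (A *v v l1) \<bullet> v l2" using v[OF l(1)] by simp
    also have "\<dots> = v l1 \<bullet> (A *v v l2)" using sym_dot[OF sym] by metis
    also have "\<dots> = l2 * (v l1 \<bullet> v l2)" using v[OF l(2)] by simp
    finally show "orthogonal (v l1) (v l2)" using \<open>l1 \<noteq> l2\<close> unfolding orthogonal_def by simp
  qed
  have "0 \<notin> v ` eigenvalues A" using v by auto
  then have "independent (v ` eigenvalues A)" using orth pairwise_orthogonal_independent by blast
  then have "finite (v ` eigenvalues A)" using independent_imp_finite by blast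
  then show ?thesis using inj finite_imageD by blast
qed

lemma eig_min_exists:
  fixes A :: "real^'n^'n"
  assumes sym: "transpose A = A"
  shows "\<exists>l\<in>eigenvalues A. \<forall>x. l * (x \<bullet> x) \<le> x \<bullet> (A *v x)"
proof -
  let ?f = "\<lambda>x. x \<bullet> (A *v x)"
  have ne: "sphere (0::real^'n) 1 \<noteq> {}" by (simp add: sphere_def) (metis norm_axis_1)
  have cont: "continuous_on (sphere 0 1) ?f"
    by (intro continuous_intros)
  obtain x0 where x0: "x0 \<in> sphere 0 1" and min: "\<And>y. y \<in> sphere 0 1 \<Longrightarrow> ?f x0 \<le> ?f y"
    using continuous_attains_inf[OF compact_sphere ne cont] by blast
  define m where "m = ?f x0"
  have nx0: "x0 \<bullet> x0 = 1" using x0 by (simp add: dot_square_norm)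
  have bound: "m * (x \<bullet> x) \<le> ?f x" for x
  proof (cases "x = 0")
    case False
    define y where "y = (1 / norm x) *\<^sub>R x"
    have "y \<in> sphere 0 1" using False by (simp add: y_def)
    then have "m \<le> ?f y" using min m_def by blast
    also have "?f y = ?f x / (norm x)^2"
      by (simp add: y_def matrix_vector_mult_scaleR power2_eq_square)
    finally have "m * (norm x)^2 \<le> ?f x" using False by (simp add: field_simps)
    then show ?thesis by (simp add: dot_square_norm)
  qed simp
  define Q where "Q = A - m *\<^sub>R mat 1"
  have Qx: "Q *v x = A *v x - m *\<^sub>R x" for x
    by (simp add: Q_def matrix_vector_mult_diff_rdistrib scaleR_matrix_vector_assoc[symmetric])
  have symQ: "transpose Q = Q" using sym by (simp add: Q_def transpose_diff' transpose_scalar transpose_mat)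
  have "Q *v x0 = 0"
  proof (rule psd_zero[OF symQ])
    show "0 \<le> x \<bullet> (Q *v x)" for x using bound[of x] by (simp add: Qx inner_diff_right)
    show "x0 \<bullet> (Q *v x0) = 0" using nx0 by (simp add: Qx inner_diff_right m_def)
  qed
  then have "A *v x0 = m *\<^sub>R x0" by (simp add: Qx)
  moreover have "x0 \<noteq> 0" using x0 by auto
  ultimately have "m \<in> eigenvalues A" unfolding eigenvalues_def by blast
  then show ?thesis using bound by blast
qed

lemma norm_from_sq:
  fixes a :: "'a::real_inner" and x :: "'b::real_inner"
  assumes "a \<bullet> a \<le> s^2 * (x \<bullet> x)" "0 \<le> s"
  shows "norm a \<le> s * norm x"
proof (rule power2_le_imp_le)
  show "(norm a)^2 \<le> (s * norm x)^2" using assms by (simp add: power2_norm_eq_inner power_mult_distrib)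
qed (use assms in simp)

lemma sigma_bound:
  fixes Phi :: "real^'d^'s"
  assumes inj: "\<And>x. Phi *v x = 0 \<Longrightarrow> x = 0"
  shows "sigma_min Phi > 0 \<and> (\<forall>x. sigma_min Phi * norm x \<le> norm (Phi *v x))"
proof -
  define A where "A = transpose Phi ** Phi"
  have sym: "transpose A = A" by (simp add: A_def matrix_transpose_mul)
  have quad: "x \<bullet> (A *v x) = (Phi *v x) \<bullet> (Phi *v x)" for x
  proof -
    have eq: "A *v x = (Phi *v x) v* Phi" by (simp add: A_def matrix_vector_mul_assoc[symmetric])
    have "x \<bullet> (A *v x) = (A *v x) \<bullet> x" by (rule inner_commute)
    also have "\<dots> = (Phi *v x) \<bullet> (Phi *v x)" unfolding eq dot_lmul_matrix ..
    finally show ?thesis .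
  qed
  define E where "E = eigenvalues A"
  have fin: "finite E" using eig_finite[OF sym] E_def by simp
  obtain l0 where l0: "l0 \<in> E" "\<And>x. l0 * (x \<bullet> x) \<le> x \<bullet> (A *v x)"
    using eig_min_exists[OF sym] unfolding E_def by blast
  have pos: "l > 0" if "l \<in> E" for l
  proof -
    have "\<exists>v. v \<noteq> 0 \<and> A *v v = l *\<^sub>R v" using that unfolding E_def eigenvalues_def by simp
    then obtain v where v1: "v \<noteq> 0" and v2: "A *v v = l *\<^sub>R v" by blast
    have "l * (v \<bullet> v) = v \<bullet> (A *v v)" unfolding v2 by (rule inner_scaleR_right[symmetric])
    also have "\<dots> = (Phi *v v) \<bullet> (Phi *v v)" by (rule quad)
    finally have eq: "l * (v \<bullet> v) = (Phi *v v) \<bullet> (Phi *v v)" .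
    have Pv: "Phi *v v \<noteq> 0" using inj v1 by metis
    have g1: "(Phi *v v) \<bullet> (Phi *v v) > 0" using Pv by (rule inner_gt_zero_iff[THEN iffD2])
    have g2: "v \<bullet> v > 0" using v1 by (rule inner_gt_zero_iff[THEN iffD2])
    show "l > 0"
    proof (rule ccontr)
      assume "\<not> l > 0"
      then have "l * (v \<bullet> v) \<le> 0" using g2 by (intro mult_nonpos_nonneg) auto
      then show False using eq g1 by linarith
    qed
  qed
  have ne: "E \<noteq> {}" using l0 by blast
  have minE: "Min E \<in> E" "Min E \<le> l0" using fin ne l0 by auto
  have sm: "sigma_min Phi = sqrt (Min E)" by (simp add: sigma_min_def E_def A_def)
  have mpos: "Min E > 0" using pos minE by blast
  show ?thesis
  proof (intro conjI allI)
    show "sigma_min Phi > 0" using sm mpos by simp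
    fix x :: "real^'d"
    have "(sigma_min Phi * norm x)^2 = Min E * (x \<bullet> x)" using sm mpos
      by (simp add: power_mult_distrib power2_norm_eq_inner)
    also have "\<dots> \<le> l0 * (x \<bullet> x)" using minE by (simp add: mult_right_mono)
    also have "\<dots> \<le> (norm (Phi *v x))^2" using l0(2)[of x] quad[of x] by (simp add: power2_norm_eq_inner)
    finally show "sigma_min Phi * norm x \<le> norm (Phi *v x)" by (rule power2_le_imp_le) simp
  qed
qed

lemma spec_bound:
  fixes B :: "real^'n^'n"
  assumes sym: "transpose B = B"
  shows "\<exists>l\<in>eigenvalues B. \<forall>x. norm (B *v x) \<le> \<bar>l\<bar> * norm x"
proof -
  define C where "C = B ** B"
  have symC: "transpose (- C) = - C" using sym by (simp add: C_def matrix_transpose_mul transpose_neg')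
  have quad: "x \<bullet> (C *v x) = (B *v x) \<bullet> (B *v x)" for x
    using sym_dot[OF sym, of x "B *v x"] by (simp add: C_def matrix_vector_mul_assoc[symmetric])
  obtain l where l: "l \<in> eigenvalues (- C)" "\<And>x. l * (x \<bullet> x) \<le> x \<bullet> (- C *v x)"
    using eig_min_exists[OF symC] by blast
  define M where "M = - l"
  have negC: "(- C) *v x = - (C *v x)" for x by (simp add: matrix_vector_mult_def vec_eq_iff sum_negf)
  have bd: "(B *v x) \<bullet> (B *v x) \<le> M * (x \<bullet> x)" for x using l(2)[of x] quad[of x] by (simp add: negC M_def)
  obtain x0 where x0: "x0 \<noteq> 0" "(- C) *v x0 = l *\<^sub>R x0" using l(1) unfolding eigenvalues_def by blast
  have "C *v x0 = - ((- C) *v x0)" by (simp only: negC minus_minus)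
  also have "\<dots> = M *\<^sub>R x0" using x0(2) by (simp add: M_def)
  finally have Cx0: "C *v x0 = M *\<^sub>R x0" .
  have q0: "M * (x0 \<bullet> x0) = (B *v x0) \<bullet> (B *v x0)" using quad[of x0] Cx0 by simp
  have p: "x0 \<bullet> x0 > 0" using x0 by simp
  have q: "0 \<le> M * (x0 \<bullet> x0)" unfolding q0 by simp
  have M0: "M \<ge> 0" using mult_neg_pos[of M "x0 \<bullet> x0"] p q by linarith
  define s where "s = sqrt M"
  have s0: "s \<ge> 0" and s2: "s^2 = M" using M0 by (simp_all add: s_def)
  have BB: "B *v (B *v x0) = s^2 *\<^sub>R x0" using Cx0 s2 by (simp add: C_def matrix_vector_mul_assoc)
  have "\<exists>l'\<in>eigenvalues B. \<bar>l'\<bar> = s"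
  proof (cases "B *v x0 + s *\<^sub>R x0 = 0")
    case True
    then have "B *v x0 = (- s) *\<^sub>R x0" by (simp add: eq_neg_iff_add_eq_0)
    then have "- s \<in> eigenvalues B" using x0 unfolding eigenvalues_def by blast
    then show ?thesis using s0 by (intro bexI[of _ "- s"]) auto
  next
    case False
    have "B *v (B *v x0 + s *\<^sub>R x0) = s *\<^sub>R (B *v x0 + s *\<^sub>R x0)"
    proof -
      have "B *v (B *v x0 + s *\<^sub>R x0) = B *v (B *v x0) + s *\<^sub>R (B *v x0)"
        by (simp only: matrix_vector_right_distrib matrix_vector_mult_scaleR)
      also have "\<dots> = s *\<^sub>R (s *\<^sub>R x0) + s *\<^sub>R (B *v x0)" by (simp only: BB power2_eq_square scaleR_scaleR)
      also have "\<dots> = s *\<^sub>R (B *v x0 + s *\<^sub>R x0)" by (simp only: scaleR_add_right add.commute)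
      finally show ?thesis .
    qed
    then have "s \<in> eigenvalues B" using False unfolding eigenvalues_def by blast
    then show ?thesis using s0 by (intro bexI[of _ s]) auto
  qed
  then obtain l' where l': "l' \<in> eigenvalues B" "\<bar>l'\<bar> = s" by blast
  have "norm (B *v x) \<le> \<bar>l'\<bar> * norm x" for x
    using norm_from_sq[of "B *v x" s x] bd[of x] s0 s2 l'(2) by simp
  then show ?thesis using l'(1) by blast
qed



lemma sel_apply: "sel_diag D *v y = (\<chi> i. if i \<in> D then y$i else 0)"
proof -
  have "(\<Sum>j\<in>UNIV. (if i = j \<and> i \<in> D then 1 else 0) * y$j) = (if i \<in> D then y$i else 0)" for i
    by (cases "i \<in> D") (simp_all add: if_distrib[of "\<lambda>x. x * _"] cong: if_cong)
  then show ?thesis by (simp add: sel_diag_def matrix_vector_mult_def vec_eq_iff)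
qed

lemma sel_sym: "transpose (sel_diag D) = sel_diag D"
  by (auto simp: transpose_def sel_diag_def vec_eq_iff)

lemma gram_sym: "transpose (gram Phi D) = gram Phi D"
  by (simp add: gram_def matrix_transpose_mul matrix_mul_assoc sel_sym)

lemma dot_transpose: "x \<bullet> (transpose A *v z) = (A *v x) \<bullet> (z::real^'m)"
proof -
  have "x \<bullet> (transpose A *v z) = (z v* A) \<bullet> x" by (simp add: inner_commute)
  also have "\<dots> = z \<bullet> (A *v x)" by (rule dot_lmul_matrix)
  finally show ?thesis by (simp add: inner_commute)
qed

lemma sel_quad: "y \<bullet> (sel_diag D *v y) = (sel_diag D *v y) \<bullet> (sel_diag D *v y)"
  by (simp add: sel_apply inner_vec_def if_distrib[of "\<lambda>x. _ * x"] cong: if_cong)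

lemma gram_quad: "x \<bullet> (gram Phi D *v x) = (sel_diag D *v (Phi *v x)) \<bullet> (sel_diag D *v (Phi *v x))"
proof -
  have "gram Phi D *v x = transpose Phi *v (sel_diag D *v (Phi *v x))"
    by (simp add: gram_def matrix_vector_mul_assoc matrix_mul_assoc)
  then have "x \<bullet> (gram Phi D *v x) = (Phi *v x) \<bullet> (sel_diag D *v (Phi *v x))"
    by (simp only: dot_transpose)
  then show ?thesis by (simp only: sel_quad)
qed

lemma rank_inj:
  assumes "rank (sel_diag D ** Phi) = CARD('d)"
  shows "(sel_diag D ** (Phi::real^'d^'s)) *v x = 0 \<Longrightarrow> x = 0"
  using assms unfolding full_rank_injective by (metis inj_eq matrix_vector_mult_0_right)

lemma gram_inv:
  assumes rk: "rank (sel_diag D ** (Phi::real^'d^'s)) = CARD('d)"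
  shows "gram Phi D ** matrix_inv (gram Phi D) = mat 1"
proof -
  have ker: "\<forall>x. gram Phi D *v x = 0 \<longrightarrow> x = 0"
  proof (intro allI impI)
    fix x assume "gram Phi D *v x = 0"
    then have "(sel_diag D *v (Phi *v x)) \<bullet> (sel_diag D *v (Phi *v x)) = 0"
      using gram_quad[of x Phi D] by simp
    then have "(sel_diag D ** Phi) *v x = 0" by (simp add: matrix_vector_mul_assoc)
    then show "x = 0" by (rule rank_inj[OF rk])
  qed
  have "invertible (gram Phi D)"
    using ker unfolding invertible_left_inverse matrix_left_invertible_ker .
  then have "\<exists>A'. gram Phi D ** A' = mat 1 \<and> A' ** gram Phi D = mat 1" unfolding invertible_def .
  then show ?thesis unfolding matrix_inv_def by (rule someI_ex[THEN conjunct1])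
qed

lemma gd_bound:
  assumes Gths: "gram Phi D *v ths = transpose Phi *v (sel_diag D *v Jh)"
    and cont: "\<And>v. norm (v - gamma *\<^sub>R (gram Phi D *v v)) \<le> a * norm v" and a0: "0 \<le> a"
  shows "norm (gd_iter Phi D gamma eta Jh th - ths) \<le> a ^ eta * norm (th - ths)"
proof -
  define F where "F = (\<lambda>th. th - gamma *\<^sub>R (gram Phi D *v th - transpose Phi *v (sel_diag D *v Jh)))"
  have step: "F x - ths = (x - ths) - gamma *\<^sub>R (gram Phi D *v (x - ths))" for x
    unfolding F_def Gths[symmetric] by (simp add: matrix_vector_mult_diff_distrib algebra_simps)
  have "norm ((F ^^ eta) th - ths) \<le> a ^ eta * norm (th - ths)"
  proof (induction eta)
    case (Suc k)
    have "norm ((F ^^ Suc k) th - ths) = norm (F ((F ^^ k) th) - ths)" by simp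
    also have "\<dots> \<le> a * norm ((F ^^ k) th - ths)" unfolding step by (rule cont)
    also have "\<dots> \<le> a * (a ^ k * norm (th - ths))" by (rule mult_left_mono[OF Suc.IH a0])
    finally show ?case by simp
  qed simp
  then show ?thesis by (simp add: gd_iter_def F_def)
qed

lemma gd_spec:
  fixes G :: "real^'d^'d"
  assumes sym: "transpose G = G" and g: "gamma > 0"
  shows "\<exists>l\<in>eigenvalues G. \<forall>v. norm (v - gamma *\<^sub>R (G *v v)) \<le> \<bar>1 - gamma * l\<bar> * norm v"
proof -
  define B where "B = mat 1 - gamma *\<^sub>R G"
  have Bx: "B *v x = x - gamma *\<^sub>R (G *v x)" for x
    by (simp add: B_def matrix_vector_mult_diff_rdistrib scaleR_matrix_vector_assoc[symmetric])
  have symB: "transpose B = B" using sym by (simp add: B_def transpose_diff' transpose_scalar)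
  obtain l where l: "l \<in> eigenvalues B" "\<And>x. norm (B *v x) \<le> \<bar>l\<bar> * norm x" using spec_bound[OF symB] by blast
  obtain v where v: "v \<noteq> 0" "B *v v = l *\<^sub>R v" using l(1) unfolding eigenvalues_def by blast
  define l' where "l' = (1 - l) / gamma"
  have "gamma *\<^sub>R (G *v v) = (1 - l) *\<^sub>R v" using v(2) unfolding Bx by (simp add: algebra_simps)
  then have "G *v v = l' *\<^sub>R v" using g unfolding l'_def
    by (metis (no_types, lifting) divide_inverse_commute less_irrefl scaleR_scaleR inverse_eq_divide
        scaleR_one left_inverse mult.commute)
  then have "l' \<in> eigenvalues G" using v(1) unfolding eigenvalues_def by blast
  moreover have "\<bar>1 - gamma * l'\<bar> = \<bar>l\<bar>" using g by (simp add: l'_def)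
  ultimately show ?thesis using l(2) unfolding Bx by metis
qed


lemma final_arith:
  fixes A R e d dA cg am q' a eps :: real
  assumes A: "A \<le> d * (am * (q' * e + 1 / (1 - a)) + eps) + dA"
    and R: "R \<le> A + cg * (e + 1 / (1 - a) + A)"
    and cg: "0 \<le> cg" and d: "0 \<le> d" and e: "0 \<le> e" and am: "0 \<le> am" and q: "0 \<le> q'" and a: "a < 1"
  shows "R \<le> (am * q' * d + cg * (am * q' * d + 1)) * e
              + ((1 + cg) * ((am + am * q') / (1 - a) * d + dA + d * eps) + cg / (1 - a))"
proof -
  define A' where "A' = am * q' * d * e + (am + am * q') / (1 - a) * d + dA + d * eps"
  have a1: "0 < 1 - a" using a by simp
  have "am * q' / (1 - a) * d \<ge> 0" using am q d a1 by simp
  then have "A \<le> A'" using A unfolding A'_def by (simp add: algebra_simps add_divide_distrib)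
  have "R \<le> (1 + cg) * A + cg * e + cg / (1 - a)" using R by (simp add: algebra_simps)
  also have "\<dots> \<le> (1 + cg) * A' + cg * e + cg / (1 - a)"
    using \<open>A \<le> A'\<close> cg by (simp add: mult_left_mono)
  also have "\<dots> = (am * q' * d + cg * (am * q' * d + 1)) * e
              + ((1 + cg) * ((am + am * q') / (1 - a) * d + dA + d * eps) + cg / (1 - a))"
    unfolding A'_def by (simp add: algebra_simps)
  finally show ?thesis .
qed

theorem mainTheorem8:
  fixes r :: "'s::finite \<Rightarrow> 'a::finite \<Rightarrow> real"
    and P :: "'s \<Rightarrow> 'a \<Rightarrow> 's \<Rightarrow> real"
    and alpha gamma epsLA epsPE :: real
    and m H eta :: nat
    and Phi :: "real^'d::finite^'s"
    and D :: "nat \<Rightarrow> 's set"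
    and mu :: "nat \<Rightarrow> 's \<Rightarrow> 'a"
    and theta :: "nat \<Rightarrow> real^'d"
    and w :: "nat \<Rightarrow> real^'s"
  defines "T \<equiv> Tbell r P alpha"
    and "Tp \<equiv> Tmu r P alpha"
    and "Jv \<equiv> Jpol r P alpha"
    and "J \<equiv> (\<lambda>k. Phi *v theta k)"
    and "deltaFV \<equiv> (SUP k\<in>{1..}. mat_sup_norm (Mproj Phi (D (k - 1))))"
    and "deltaApp \<equiv> (SUP k\<in>{1..}. SUP mu'\<in>UNIV.
                       sup_norm (Mproj Phi (D (k - 1)) *v Jpol r P alpha mu' - Jpol r P alpha mu'))"
    and "alphaGD \<equiv> (SUP k. SUP l\<in>eigenvalues (gram Phi (D k)). \<bar>1 - gamma * l\<bar>)"
    and "c \<equiv> sqrt (real CARD('s)) * mat_sup_norm Phi / sigma_min Phi"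
  assumes P_nonneg: "\<And>s a j. P s a j \<ge> 0"
    and P_sum: "\<And>s a. (\<Sum>j\<in>UNIV. P s a j) = 1"
    and r_range: "\<And>s a. 0 \<le> r s a \<and> r s a \<le> 1"
    and alpha: "0 < alpha" "alpha < 1"
    and params: "m \<ge> 1" "H \<ge> 1" "eta \<ge> 1" "gamma > 0" "epsLA \<ge> 0" "epsPE \<ge> 0"
    and rankD: "\<And>k. rank (sel_diag (D k) ** Phi) = CARD('d)"
    and FV_finite: "bdd_above ((\<lambda>k. mat_sup_norm (Mproj Phi (D (k - 1)))) ` {1..})"
    and lookahead: "\<And>k. sup_norm ((T ^^ H) (J k) - Tp (mu (Suc k)) ((T ^^ (H - 1)) (J k))) \<le> epsLA"
    and w_supp: "\<And>k i. i \<notin> D k \<Longrightarrow> w (Suc k) $ i = 0"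
    and w_bound: "\<And>k. sup_norm (w (Suc k)) \<le> epsPE"
    and gd: "\<And>k. theta (Suc k) =
               gd_iter Phi (D k) gamma eta
                 ((Tp (mu (Suc k)) ^^ m) ((T ^^ (H - 1)) (J k)) + w (Suc k)) (theta k)"
  shows "\<forall>k\<ge>1. sup_norm (Jv (mu k) - J k)
           \<le> (alpha ^ (m + H - 1) * deltaFV + c * alphaGD ^ eta * (alpha ^ (m + H - 1) * deltaFV + 1))
               * sup_norm (J (k - 1) - Jv (mu (k - 1)))
             + ((1 + c * alphaGD ^ eta)
                 * ((alpha ^ m + alpha ^ (m + H - 1)) / (1 - alpha) * deltaFV + deltaApp + deltaFV * epsPE)
                + c * alphaGD ^ eta / (1 - alpha))"
proof (intro allI impI)
  interpret M: mdp r P alpha using P_nonneg P_sum r_range alpha by unfold_locales auto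
  have Tdef: "T = Tbell r P alpha" using \<open>T \<equiv> Tbell r P alpha\<close> by simp
  have Tpdef: "Tp = Tmu r P alpha" using \<open>Tp \<equiv> Tmu r P alpha\<close> by simp
  have Jvdef: "Jv = Jpol r P alpha" using \<open>Jv \<equiv> Jpol r P alpha\<close> by simp
  have Jdef: "J = (\<lambda>k. Phi *v theta k)" using \<open>J \<equiv> (\<lambda>k. Phi *v theta k)\<close> by simp
  have FVdef: "deltaFV = (SUP k\<in>{1..}. mat_sup_norm (Mproj Phi (D (k - 1))))"
    using \<open>deltaFV \<equiv> (SUP k\<in>{1..}. mat_sup_norm (Mproj Phi (D (k - 1))))\<close> by simp
  have Appdef: "deltaApp = (SUP k\<in>{1..}. SUP mu'\<in>UNIV.
                       sup_norm (Mproj Phi (D (k - 1)) *v Jpol r P alpha mu' - Jpol r P alpha mu'))"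
    using \<open>deltaApp \<equiv> (SUP k\<in>{1..}. SUP mu'\<in>UNIV.
                       sup_norm (Mproj Phi (D (k - 1)) *v Jpol r P alpha mu' - Jpol r P alpha mu'))\<close> by simp
  have GDdef: "alphaGD = (SUP k. SUP l\<in>eigenvalues (gram Phi (D k)). \<bar>1 - gamma * l\<bar>)"
    using \<open>alphaGD \<equiv> (SUP k. SUP l\<in>eigenvalues (gram Phi (D k)). \<bar>1 - gamma * l\<bar>)\<close> by simp
  have cdef: "c = sqrt (real CARD('s)) * mat_sup_norm Phi / sigma_min Phi"
    using \<open>c \<equiv> sqrt (real CARD('s)) * mat_sup_norm Phi / sigma_min Phi\<close> by simp

  fix k :: nat assume "k \<ge> 1"
  then obtain n where kn: "k = Suc n" by (cases k) auto

  define S where "S = sel_diag (D n)"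
  define G where "G = gram Phi (D n)"
  define Mp where "Mp = Mproj Phi (D n)"
  define X where "X = (T ^^ (H - 1)) (J n)"
  define Jh where "Jh = (Tp (mu (Suc n)) ^^ m) X + w (Suc n)"
  define ths where "ths = matrix_inv G *v (transpose Phi *v (S *v Jh))"
  define Jk where "Jk = Jv (mu (Suc n))"
  define Jn where "Jn = Jv (mu n)"
  define e where "e = sup_norm (J n - Jn)"
  define cg where "cg = c * alphaGD ^ eta"

  have Ginv: "G ** matrix_inv G = mat 1" unfolding G_def by (rule gram_inv[OF rankD])
  have Gths: "G *v ths = transpose Phi *v (S *v Jh)"
    by (simp only: ths_def matrix_vector_mul_assoc[of G] Ginv matrix_vector_mul_lid)
  have MJh: "Mp *v Jh = Phi *v ths"
    unfolding Mp_def Mproj_def ths_def G_def S_def by (simp add: matrix_vector_mul_assoc matrix_mul_assoc)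
  have th1: "theta (Suc n) = gd_iter Phi (D n) gamma eta Jh (theta n)"
    unfolding Jh_def X_def by (rule gd)
  have symG: "transpose G = G" unfolding G_def by (rule gram_sym)
  obtain lG where lG: "lG \<in> eigenvalues G" "\<And>v. norm (v - gamma *\<^sub>R (G *v v)) \<le> \<bar>1 - gamma * lG\<bar> * norm v"
    using gd_spec[OF symG params(4)] by blast
  have finE: "finite (eigenvalues (gram Phi Dk))" for Dk using eig_finite[OF gram_sym] .
  have inner_le: "\<bar>1 - gamma * lG\<bar> \<le> (SUP l\<in>eigenvalues (gram Phi (D n)). \<bar>1 - gamma * l\<bar>)"
    using lG(1) unfolding G_def by (intro cSUP_upper bdd_above_finite finite_imageI finE)
  have "finite (range (\<lambda>Dk. SUP l\<in>eigenvalues (gram Phi Dk). \<bar>1 - gamma * l\<bar>))" by simp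
  then have "bdd_above (range (\<lambda>k. SUP l\<in>eigenvalues (gram Phi (D k)). \<bar>1 - gamma * l\<bar>))"
    by (rule bdd_above_finite[OF finite_subset, rotated]) auto
  then have "(SUP l\<in>eigenvalues (gram Phi (D n)). \<bar>1 - gamma * l\<bar>) \<le> alphaGD"
    unfolding GDdef by (rule cSUP_upper[rotated]) simp
  with inner_le have aG: "\<bar>1 - gamma * lG\<bar> \<le> alphaGD" by linarith
  have aG0: "0 \<le> alphaGD" using aG by linarith
  have gdb: "norm (theta (Suc n) - ths) \<le> alphaGD ^ eta * norm (theta n - ths)"
    unfolding th1
  proof (rule gd_bound[OF _ _ aG0])
    show "gram Phi (D n) *v ths = transpose Phi *v (sel_diag (D n) *v Jh)" using Gths unfolding G_def S_def .
    show "norm (v - gamma *\<^sub>R (gram Phi (D n) *v v)) \<le> alphaGD * norm v" for v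
      using lG(2)[of v] aG unfolding G_def by (smt (verit) mult_right_mono norm_ge_zero)
  qed
  have injPhi: "Phi *v x = 0 \<Longrightarrow> x = 0" for x
    using rank_inj[OF rankD[of n], of x] by (simp add: matrix_vector_mul_assoc[symmetric])
  have sig: "sigma_min Phi > 0" "\<And>x. sigma_min Phi * norm x \<le> norm (Phi *v x)"
    using sigma_bound[of Phi] injPhi by blast+
  have c0: "0 \<le> c" unfolding cdef using sig(1) mat_sup_norm_nonneg[of Phi] by simp
  have cg0: "0 \<le> cg" unfolding cg_def using c0 aG0 by simp
  have proj: "sup_norm (J (Suc n) - Mp *v Jh) \<le> cg * sup_norm (J n - Mp *v Jh)"
  proof -
    have eq1: "J (Suc n) - Mp *v Jh = Phi *v (theta (Suc n) - ths)"
      unfolding Jdef MJh by (simp add: matrix_vector_mult_diff_distrib)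
    have eq2: "J n - Mp *v Jh = Phi *v (theta n - ths)"
      unfolding Jdef MJh by (simp add: matrix_vector_mult_diff_distrib)
    have s1: "sup_norm (J (Suc n) - Mp *v Jh) \<le> mat_sup_norm Phi * norm (theta (Suc n) - ths)"
      unfolding eq1 by (rule order_trans[OF mat_sup_norm_bound mult_left_mono[OF sup_norm_le_norm mat_sup_norm_nonneg]])
    have s3a: "sigma_min Phi * norm (theta n - ths) \<le> sqrt (real CARD('s)) * sup_norm (J n - Mp *v Jh)"
      unfolding eq2 by (rule order_trans[OF sig(2) norm_le_sup_norm])
    have s3: "norm (theta n - ths) \<le> sqrt (real CARD('s)) * sup_norm (J n - Mp *v Jh) / sigma_min Phi"
      using s3a sig(1) by (simp add: field_simps)
    have "norm (theta (Suc n) - ths) \<le> alphaGD ^ eta * (sqrt (real CARD('s)) * sup_norm (J n - Mp *v Jh) / sigma_min Phi)"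
      using gdb mult_left_mono[OF s3, of "alphaGD ^ eta"] aG0 by simp
    then have "mat_sup_norm Phi * norm (theta (Suc n) - ths) \<le> mat_sup_norm Phi * (alphaGD ^ eta * (sqrt (real CARD('s)) * sup_norm (J n - Mp *v Jh) / sigma_min Phi))"
      by (rule mult_left_mono[OF _ mat_sup_norm_nonneg])
    also have "\<dots> = cg * sup_norm (J n - Mp *v Jh)" by (simp add: cg_def cdef)
    finally show ?thesis using s1 by linarith
  qed
  have Tc: "\<And>x y. sup_norm (T x - T y) \<le> alpha * sup_norm (x - y)" unfolding Tdef by (rule M.Tbell_contr)
  have Tpc: "\<And>x y. sup_norm (Tp (mu (Suc n)) x - Tp (mu (Suc n)) y) \<le> alpha * sup_norm (x - y)"
    unfolding Tpdef by (rule M.Tmu_contr)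
  have e0: "0 \<le> e" unfolding e_def by (rule sup_norm_nonneg)
  have a1: "0 < 1 - alpha" using alpha by simp
  have boxJ: "M.box (Jv mu')" for mu' unfolding Jvdef by (rule M.Jpol_box)
  have hX: "sup_norm (X - Jk) \<le> alpha ^ (H - 1) * e + 1 / (1 - alpha)"
  proof -
    have "sup_norm (X - (T ^^ (H - 1)) Jn) \<le> alpha ^ (H - 1) * e"
      unfolding X_def e_def by (rule M.pow_contr[OF Tc])
    moreover have "sup_norm ((T ^^ (H - 1)) Jn - Jk) \<le> 1 / (1 - alpha)"
      unfolding Jn_def Jk_def Tdef by (intro M.box_dist M.Tbell_pow_box boxJ)
    ultimately show ?thesis using sup_norm_tri3[of X Jk "(T ^^ (H - 1)) Jn"] by linarith
  qed
  have fixJk: "(Tp (mu (Suc n)) ^^ m) Jk = Jk" unfolding Jk_def Tpdef Jvdef by (rule M.Jpol_fix_pow)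
  have hJh: "sup_norm (Jh - Jk) \<le> alpha ^ m * (alpha ^ (H - 1) * e + 1 / (1 - alpha)) + epsPE"
  proof -
    have eq: "Jh - Jk = ((Tp (mu (Suc n)) ^^ m) X - (Tp (mu (Suc n)) ^^ m) Jk) + w (Suc n)"
      unfolding Jh_def fixJk by simp
    have "sup_norm ((Tp (mu (Suc n)) ^^ m) X - (Tp (mu (Suc n)) ^^ m) Jk) \<le> alpha ^ m * sup_norm (X - Jk)"
      by (rule M.pow_contr[OF Tpc])
    also have "\<dots> \<le> alpha ^ m * (alpha ^ (H - 1) * e + 1 / (1 - alpha))"
      using hX alpha by (intro mult_left_mono) auto
    finally show ?thesis unfolding eq using sup_norm_triangle w_bound[of n] by (smt (verit))
  qed
  have FVle: "mat_sup_norm Mp \<le> deltaFV"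
    unfolding FVdef Mp_def using cSUP_upper[OF _ FV_finite, of "Suc n"] by simp
  have FV0: "0 \<le> deltaFV" using FVle mat_sup_norm_nonneg[of Mp] by linarith
  have Appin: "sup_norm (Mproj Phi Dk *v Jpol r P alpha mu' - Jpol r P alpha mu')
        \<le> (SUP mu'\<in>UNIV. sup_norm (Mproj Phi Dk *v Jpol r P alpha mu' - Jpol r P alpha mu'))" for Dk mu'
    by (intro cSUP_upper bdd_above_finite finite_imageI) auto
  have "finite (range (\<lambda>Dk. SUP mu'\<in>UNIV. sup_norm (Mproj Phi Dk *v Jpol r P alpha mu' - Jpol r P alpha mu')))"
    by simp
  then have bddApp: "bdd_above ((\<lambda>k. SUP mu'\<in>UNIV. sup_norm (Mproj Phi (D (k - 1)) *v Jpol r P alpha mu' - Jpol r P alpha mu')) ` {1..})"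
    by (rule bdd_above_finite[OF finite_subset, rotated]) auto
  have Appout: "(SUP mu'\<in>UNIV. sup_norm (Mproj Phi (D n) *v Jpol r P alpha mu' - Jpol r P alpha mu')) \<le> deltaApp"
    unfolding Appdef using cSUP_upper[OF _ bddApp, of "Suc n"] by simp
  have Appl: "sup_norm (Mp *v Jk - Jk) \<le> deltaApp"
    using Appin[of "D n" "mu (Suc n)"] Appout unfolding Mp_def Jk_def Jvdef by linarith
  define A where "A = sup_norm (Mp *v Jh - Jk)"
  have hA: "A \<le> deltaFV * (alpha ^ m * (alpha ^ (H - 1) * e + 1 / (1 - alpha)) + epsPE) + deltaApp"
  proof -
    have eq: "Mp *v Jh - Jk = Mp *v (Jh - Jk) + (Mp *v Jk - Jk)" by (simp add: matrix_vector_mult_diff_distrib)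
    have "sup_norm (Mp *v (Jh - Jk)) \<le> mat_sup_norm Mp * sup_norm (Jh - Jk)" by (rule mat_sup_norm_bound)
    also have "\<dots> \<le> deltaFV * sup_norm (Jh - Jk)" by (rule mult_right_mono[OF FVle sup_norm_nonneg])
    also have "\<dots> \<le> deltaFV * (alpha ^ m * (alpha ^ (H - 1) * e + 1 / (1 - alpha)) + epsPE)"
      by (rule mult_left_mono[OF hJh FV0])
    finally show ?thesis unfolding A_def eq using sup_norm_triangle Appl by (smt (verit))
  qed
  have hR: "sup_norm (Jk - J (Suc n)) \<le> A + cg * (e + 1 / (1 - alpha) + A)"
  proof -
    have r1: "sup_norm (Jk - J (Suc n)) \<le> A + sup_norm (J (Suc n) - Mp *v Jh)"
      unfolding A_def using sup_norm_tri3[of Jk "J (Suc n)" "Mp *v Jh"] sup_norm_commute[of Jk "Mp *v Jh"]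
        sup_norm_commute[of "Mp *v Jh" "J (Suc n)"] by linarith
    have "sup_norm (J n - Mp *v Jh) \<le> sup_norm (J n - Jn) + sup_norm (Jn - Mp *v Jh)" by (rule sup_norm_tri3)
    moreover have "sup_norm (Jn - Mp *v Jh) \<le> sup_norm (Jn - Jk) + sup_norm (Jk - Mp *v Jh)" by (rule sup_norm_tri3)
    moreover have "sup_norm (Jn - Jk) \<le> 1 / (1 - alpha)" unfolding Jn_def Jk_def by (intro M.box_dist boxJ)
    moreover have "sup_norm (Jk - Mp *v Jh) = A" unfolding A_def by (rule sup_norm_commute)
    ultimately have "sup_norm (J n - Mp *v Jh) \<le> e + 1 / (1 - alpha) + A" unfolding e_def by linarith
    then have "cg * sup_norm (J n - Mp *v Jh) \<le> cg * (e + 1 / (1 - alpha) + A)" by (rule mult_left_mono[OF _ cg0])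
    then show ?thesis using r1 proj by linarith
  qed
  have pw: "alpha ^ (m + H - 1) = alpha ^ m * alpha ^ (H - 1)"
    using params(2) by (simp add: power_add[symmetric])
  have "sup_norm (Jk - J (Suc n)) \<le> (alpha ^ m * alpha ^ (H - 1) * deltaFV + cg * (alpha ^ m * alpha ^ (H - 1) * deltaFV + 1)) * e
              + ((1 + cg) * ((alpha ^ m + alpha ^ m * alpha ^ (H - 1)) / (1 - alpha) * deltaFV + deltaApp + deltaFV * epsPE) + cg / (1 - alpha))"
    by (rule final_arith[OF hA hR cg0 FV0 e0]) (use alpha in simp_all)
  then show "sup_norm (Jv (mu k) - J k)
           \<le> (alpha ^ (m + H - 1) * deltaFV + c * alphaGD ^ eta * (alpha ^ (m + H - 1) * deltaFV + 1))
               * sup_norm (J (k - 1) - Jv (mu (k - 1)))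
             + ((1 + c * alphaGD ^ eta)
                 * ((alpha ^ m + alpha ^ (m + H - 1)) / (1 - alpha) * deltaFV + deltaApp + deltaFV * epsPE)
                + c * alphaGD ^ eta / (1 - alpha))"
    unfolding kn pw by (simp add: Jk_def e_def Jn_def cg_def)
qed

end
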